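(* Let $\mathbf{p}_0,\ldots,\mathbf{p}_d\in\mathbb{R}^d$ be $d+1$ points not contained in any $(d-1)$-dimensional affine subspace, let $\lambda_0,\ldots,\lambda_d\in(0,1)$, and let $S_i(\mathbf{x})=\lambda_i\mathbf{x}+(1-\lambda_i)\mathbf{p}_i$ for $i=0,\ldots,d$. If $\sum_{i=0}^d\lambda_i\ge d$, then the unique non-empty compact set $X$ with $X=\bigcup_{i=0}^dS_i(X)$ equals the convex hull $\mathrm{conv}(\{\mathbf{p}_0,\ldots,\mathbf{p}_d\})$. *)

theory Defs
  imports "HOL-Analysis.Analysis"
begin

end

theory Submission
  imports Defs
begin

lemma contract_subset:
  fixes A B :: "'a::heine_borel set" and T :: "nat \<Rightarrow> 'a \<Rightarrow> 'a"
  assumes A: "compact A" "A \<noteq> {}" and B: "closed B" "B \<noteq> {}"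
    and cov: "\<And>a. a \<in> A \<Longrightarrow> \<exists>i\<in>I. \<exists>a'\<in>A. a = T i a'"
    and inv: "\<And>i b. i \<in> I \<Longrightarrow> b \<in> B \<Longrightarrow> T i b \<in> B"
    and lip: "\<And>i x y. i \<in> I \<Longrightarrow> dist (T i x) (T i y) \<le> k i * dist x y"
    and k: "\<And>i. i \<in> I \<Longrightarrow> 0 \<le> k i \<and> k i < 1"
  shows "A \<subseteq> B"
proof -
  have "continuous_on A (\<lambda>x. infdist x B)"
    by (intro continuous_intros)
  then obtain a where a: "a \<in> A" "\<And>y. y \<in> A \<Longrightarrow> infdist y B \<le> infdist a B"
    using continuous_attains_sup[OF A] by blast
  obtain i a' where i: "i \<in> I" "a' \<in> A" "a = T i a'" using cov[OF a(1)] by blast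
  obtain b where b: "b \<in> B" "infdist a' B = dist a' b"
    using infdist_attains_inf[OF B] by blast
  have "infdist a B \<le> dist (T i a') (T i b)"
    using i b inv infdist_le by blast
  also have "\<dots> \<le> k i * infdist a' B" using lip[OF i(1)] b by simp
  also have "\<dots> \<le> k i * infdist a B" using a(2)[OF i(2)] k[OF i(1)]
    by (simp add: mult_left_mono)
  finally have "infdist a B \<le> k i * infdist a B" .
  hence "infdist a B = 0" using k[OF i(1)] infdist_nonneg[of a B]
    by (smt (verit) mult_le_cancel_right1)
  show ?thesis
  proof
    fix x assume "x \<in> A"
    hence "infdist x B = 0" using a(2) \<open>infdist a B = 0\<close> infdist_nonneg[of x B] by fastforce
    thus "x \<in> B" using in_closed_iff_infdist_zero[OF B] by blast
  qed
qed

theorem lemma2p3: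
  fixes p :: "nat \<Rightarrow> real ^ 'n" and lam :: "nat \<Rightarrow> real" and d :: nat
  assumes "d = CARD('n)"
    and "aff_dim (p ` {..d}) = int d"
    and "\<And>i. i \<le> d \<Longrightarrow> 0 < lam i \<and> lam i < 1"
    and "(\<Sum>i\<le>d. lam i) \<ge> real d"
  shows "(\<exists>!X :: (real ^ 'n) set. X \<noteq> {} \<and> compact X \<and>
            X = (\<Union>i\<le>d. (\<lambda>x. lam i *\<^sub>R x + (1 - lam i) *\<^sub>R p i) ` X))
       \<and> (\<forall>X :: (real ^ 'n) set. X \<noteq> {} \<and> compact X \<and>
            X = (\<Union>i\<le>d. (\<lambda>x. lam i *\<^sub>R x + (1 - lam i) *\<^sub>R p i) ` X)
            \<longrightarrow> X = convex hull (p ` {..d}))"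
proof -
  define T where "T = (\<lambda>i x. lam i *\<^sub>R x + (1 - lam i) *\<^sub>R p i)"
  define C where "C = convex hull (p ` {..d})"
  have lam: "\<And>i. i \<le> d \<Longrightarrow> 0 < lam i \<and> lam i < 1" by fact
  have inj: "inj_on p {..d}"
  proof (rule ccontr)
    assume "\<not> inj_on p {..d}"
    hence "card (p ` {..d}) < card {..d}"
      using card_image_le[of "{..d}" p] eq_card_imp_inj_on[of "{..d}" p] by fastforce
    hence "card (p ` {..d}) \<le> d" by simp
    thus False using aff_dim_le_card[of "p ` {..d}"] assms(2) by simp
  qed
  have Cc: "compact C" "convex C" "C \<noteq> {}" unfolding C_def
    by (auto simp: compact_convex_hull finite_imp_compact)
  have pC: "\<And>i. i \<le> d \<Longrightarrow> p i \<in> C" unfolding C_def by (simp add: hull_inc)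
  have TC: "\<And>i c. i \<le> d \<Longrightarrow> c \<in> C \<Longrightarrow> T i c \<in> C"
  proof -
    fix i c assume ic: "i \<le> d" "c \<in> C"
    show "T i c \<in> C" unfolding T_def
      by (rule convexD[OF Cc(2) ic(2) pC[OF ic(1)]]) (use lam[OF ic(1)] in auto)
  qed
  have lip: "\<And>i x y. i \<le> d \<Longrightarrow> dist (T i x) (T i y) \<le> lam i * dist x y"
  proof -
    fix i x y assume "i \<le> d"
    have "T i x - T i y = lam i *\<^sub>R (x - y)" unfolding T_def by (simp add: algebra_simps)
    thus "dist (T i x) (T i y) \<le> lam i * dist x y"
      using lam[OF \<open>i \<le> d\<close>] by (simp add: dist_norm)
  qed
  have cov: "\<And>c. c \<in> C \<Longrightarrow> \<exists>i\<in>{..d}. \<exists>c'\<in>C. c = T i c'"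
  proof -
    fix c assume "c \<in> C"
    then obtain u where u: "\<forall>x\<in>p ` {..d}. 0 \<le> u x" "sum u (p ` {..d}) = 1"
      "(\<Sum>x\<in>p ` {..d}. u x *\<^sub>R x) = c"
      unfolding C_def by (auto simp: convex_hull_finite)
    define m where "m = (\<lambda>j. u (p j))"
    have m: "\<And>j. j \<le> d \<Longrightarrow> 0 \<le> m j" "(\<Sum>j\<le>d. m j) = 1" "(\<Sum>j\<le>d. m j *\<^sub>R p j) = c"
      using u inj unfolding m_def by (auto simp: sum.reindex)
    have "\<exists>i\<le>d. m i \<ge> 1 - lam i"
    proof (rule ccontr)
      assume "\<not> ?thesis"
      hence "\<And>i. i \<in> {..d} \<Longrightarrow> m i < 1 - lam i" by auto
      hence "(\<Sum>j\<le>d. m j) < (\<Sum>j\<le>d. 1 - lam j)"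
        by (intro sum_strict_mono) auto
      also have "\<dots> = real (d + 1) - (\<Sum>j\<le>d. lam j)" by (simp add: sum_subtractf)
      finally show False using m(2) assms(4) by simp
    qed
    then obtain i where i: "i \<le> d" "m i \<ge> 1 - lam i" by blast
    define v where "v = (\<lambda>j. (m j - (if j = i then 1 - lam i else 0)) / lam i)"
    have li: "0 < lam i" "lam i < 1" using lam[OF i(1)] by auto
    have v0: "\<And>j. j \<in> {..d} \<Longrightarrow> 0 \<le> v j" unfolding v_def using m(1) i li by auto
    have "(\<Sum>j\<le>d. m j - (if j = i then 1 - lam i else 0)) = lam i"
      using m(2) i(1) by (simp add: sum_subtractf)
    hence v1: "(\<Sum>j\<le>d. v j) = 1" unfolding v_def using li
      by (simp add: sum_divide_distrib[symmetric])
    define c' where "c' = (\<Sum>j\<le>d. v j *\<^sub>R p j)"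
    have c'C: "c' \<in> C" unfolding c'_def
      by (rule convex_sum[OF _ Cc(2) v1]) (use v0 pC in auto)
    have "lam i *\<^sub>R c' = (\<Sum>j\<le>d. (m j - (if j = i then 1 - lam i else 0)) *\<^sub>R p j)"
      unfolding c'_def v_def scaleR_sum_right using li by (simp add: scaleR_scaleR)
    also have "\<dots> = c - (1 - lam i) *\<^sub>R p i"
      using m(3) i(1) by (simp add: scaleR_diff_left sum_subtractf if_distrib[of "\<lambda>a. a *\<^sub>R _"] cong: if_cong)
    finally have "c = T i c'" unfolding T_def by simp
    thus "\<exists>i\<in>{..d}. \<exists>c'\<in>C. c = T i c'" using i(1) c'C by blast
  qed
  have selfsim: "C = (\<Union>i\<le>d. T i ` C)"
    using cov TC by blast
  have lamI: "\<And>i. i \<in> {..d} \<Longrightarrow> 0 \<le> lam i \<and> lam i < 1" using lam by force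
  have lipI: "\<And>i x y. i \<in> {..d} \<Longrightarrow> dist (T i x) (T i y) \<le> lam i * dist x y"
    using lip by blast
  have char: "X = C" if X: "X \<noteq> {}" "compact X" "X = (\<Union>i\<le>d. T i ` X)" for X
  proof
    have covX: "\<And>a. a \<in> X \<Longrightarrow> \<exists>i\<in>{..d}. \<exists>a'\<in>X. a = T i a'"
      using X(3) by blast
    have invX: "\<And>i b. i \<in> {..d} \<Longrightarrow> b \<in> X \<Longrightarrow> T i b \<in> X"
      using X(3) by blast
    have TCI: "\<And>i b. i \<in> {..d} \<Longrightarrow> b \<in> C \<Longrightarrow> T i b \<in> C"
      using TC by blast
    have clC: "closed C" using Cc(1) compact_imp_closed by blast
    have clX: "closed X" using X(2) compact_imp_closed by blast
    show "X \<subseteq> C"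
      by (rule contract_subset[OF X(2) X(1) clC Cc(3) covX TCI lipI lamI])
    show "C \<subseteq> X"
      by (rule contract_subset[OF Cc(1) Cc(3) clX X(1) cov invX lipI lamI])
  qed
  have ex: "\<exists>!X. X \<noteq> {} \<and> compact X \<and> X = (\<Union>i\<le>d. T i ` X)"
  proof (rule ex1I[of _ C])
    show "C \<noteq> {} \<and> compact C \<and> C = (\<Union>i\<le>d. T i ` C)" using Cc selfsim by blast
    show "\<And>X. X \<noteq> {} \<and> compact X \<and> X = (\<Union>i\<le>d. T i ` X) \<Longrightarrow> X = C"
      using char by (elim conjE)
  qed
  have all: "\<forall>X. X \<noteq> {} \<and> compact X \<and> X = (\<Union>i\<le>d. T i ` X) \<longrightarrow> X = C"
    using char by (intro allI impI) (elim conjE)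
  from ex all show ?thesis unfolding T_def C_def by (rule conjI)
qed

end
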